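(* Let $C\subseteq 2^X$ be an ample class with a representation map $r$, let $B$ be a cube of $2^X$ and $Y\subseteq X$. Then: (1) $r_B:C\cap B\to X(C\cap B)$, $r_B(c)=r(c)\cap\mathrm{supp}(B)$, is a representation map for $C\cap B$; (2) $r^Y:C^Y\to X(C^Y)$ is a representation map for $C^Y$, where for $c\in C^Y$, letting $B_c$ be the unique cube of $C$ with support $Y$ and tag $c$ and $c^{B_c}$ the unique concept of $B_c$ with $r(c^{B_c})\cap Y=Y$, we set $r^Y(c)=r(c^{B_c})\setminus Y$; (3) $r_Y:C_Y\to X(C_Y)$ is a representation map for $C_Y$, where for $c\in C_Y$, letting $B_c$ be the unique cube of $2^X$ with support $Y$ and tag $c$ and $c_{B_c}$ the unique concept of $C\cap B_c$ with $r(c_{B_c})\cap Y=\varnothing$, we set $r_Y(c)=r(c_{B_c})$.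
   Context: Concepts are subsets of the finite set $X$, identified with characteristic functions; $c|Y$ is restriction and $C|Y=\{c|Y:c\in C\}$. $Y$ is shattered by $C$ if $C|Y=2^Y$. A cube of $2^X$ is $\{T\cup Z:Z\subseteq Y\}$ with $Y\subseteq X$ its support $\mathrm{supp}$ and $T\subseteq X\setminus Y$ its tag; a cube of $C$ is one contained in $C$. $C$ is ample if every shattered set is the support of a cube of $C$; $X(C)$ is the family of shattered sets. $C_Y=C|(X\setminus Y)$ (restriction) and the reduction $C^Y$ is the class on $X\setminus Y$ consisting of the tags of all cubes of $C$ with support $Y$; $C\cap B$, $C_Y$, $C^Y$ are ample when $C$ is. A representation map for an ample class $E$ is a bijection $r:E\to X(E)$ with $c|(r(c)\cup r(c'))\ne c'|(r(c)\cup r(c'))$ for all distinct $c,c'\in E$. (For a representation map $r$ of $C$, the concepts $c^{B_c}$ and $c_{B_c}$ above exist and are unique.) *)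

theory Defs
  imports Main
begin

(* Concepts on ground set X are sets c \<subseteq> X (characteristic functions). *)

definition restr :: "'a set set \<Rightarrow> 'a set \<Rightarrow> 'a set set" where
  "restr C Y = (\<lambda>c. c \<inter> Y) ` C"

definition shattered :: "'a set set \<Rightarrow> 'a set \<Rightarrow> bool" where
  "shattered C Y \<longleftrightarrow> restr C Y = Pow Y"

definition shattered_sets :: "'a set \<Rightarrow> 'a set set \<Rightarrow> 'a set set" where
  "shattered_sets X C = {Y. Y \<subseteq> X \<and> shattered C Y}"

definition cube :: "'a set \<Rightarrow> 'a set \<Rightarrow> 'a set set" where
  "cube T Y = {T \<union> Z | Z. Z \<subseteq> Y}"

definition ample :: "'a set \<Rightarrow> 'a set set \<Rightarrow> bool" where
  "ample X C \<longleftrightarrow> C \<subseteq> Pow X \<and>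
     (\<forall>Y \<in> shattered_sets X C. \<exists>T. T \<subseteq> X - Y \<and> cube T Y \<subseteq> C)"

definition reduction :: "'a set \<Rightarrow> 'a set set \<Rightarrow> 'a set \<Rightarrow> 'a set set" where
  "reduction X C Y = {T. T \<subseteq> X - Y \<and> cube T Y \<subseteq> C}"

definition is_rep_map :: "'a set \<Rightarrow> 'a set set \<Rightarrow> ('a set \<Rightarrow> 'a set) \<Rightarrow> bool" where
  "is_rep_map X E r \<longleftrightarrow> bij_betw r E (shattered_sets X E) \<and>
     (\<forall>c\<in>E. \<forall>c'\<in>E. c \<noteq> c' \<longrightarrow> c \<inter> (r c \<union> r c') \<noteq> c' \<inter> (r c \<union> r c'))"

end

theory Submission
  imports Defs
begin


lemma restr_sub_Pow: "restr C Y \<subseteq> Pow Y" unfolding restr_def by auto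

lemma shattered_iff: "shattered C Y \<longleftrightarrow> Pow Y \<subseteq> restr C Y"
  unfolding shattered_def using restr_sub_Pow by blast

lemma shattered_mono:
  assumes "shattered C A" "A' \<subseteq> A" shows "shattered C A'"
  unfolding shattered_iff
proof
  fix Z assume "Z \<in> Pow A'"
  then have "Z \<in> restr C A" using assms unfolding shattered_def by auto
  then obtain c where "c \<in> C" "Z = c \<inter> A" unfolding restr_def by auto
  then have "Z = c \<inter> A'" using \<open>Z \<in> Pow A'\<close> assms(2) by auto
  then show "Z \<in> restr C A'" using \<open>c \<in> C\<close> unfolding restr_def by auto
qed

lemma restr_restr: "A \<subseteq> B \<Longrightarrow> restr (restr C B) A = restr C A"
  unfolding restr_def image_image by (rule image_cong) auto

lemma shattered_restr: "A \<subseteq> B \<Longrightarrow> shattered (restr C B) A \<longleftrightarrow> shattered C A"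
  unfolding shattered_def by (simp add: restr_restr)

lemma cube_iff: "T \<inter> S = {} \<Longrightarrow> d \<in> cube T S \<longleftrightarrow> d - S = T"
proof
  assume "T \<inter> S = {}" "d \<in> cube T S"
  then show "d - S = T" unfolding cube_def by auto
next
  assume "T \<inter> S = {}" "d - S = T"
  then have "d = T \<union> (d \<inter> S)" "d \<inter> S \<subseteq> S" by auto
  then show "d \<in> cube T S" unfolding cube_def by blast
qed

lemma pajor:
  "finite G \<Longrightarrow> D \<subseteq> Pow G \<Longrightarrow> card D \<le> card (shattered_sets G D)"
proof (induction G arbitrary: D rule: finite_induct)
  case empty
  show ?case
  proof (cases "D = {}")
    case True then show ?thesis by simp
  next
    case False
    with empty have D: "D = {{}}" by auto
    have "shattered D {}" unfolding shattered_def restr_def D by auto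
    then have "shattered_sets {} D = {{}}" unfolding shattered_sets_def by auto
    then show ?thesis using D by simp
  qed
next
  case (insert x G)
  define D0 where "D0 = (\<lambda>d. d - {x}) ` D"
  define D1 where "D1 = {d. d \<in> D \<and> insert x d \<in> D \<and> x \<notin> d}"
  define Da where "Da = {d \<in> D. x \<notin> d}"
  define Db where "Db = {d \<in> D. x \<in> d}"
  have "finite (Pow (insert x G))" using insert(1) by simp
  then have finD: "finite D" using insert(4) by (rule finite_subset[rotated])
  have D0G: "D0 \<subseteq> Pow G" using insert(4) unfolding D0_def by auto
  have D1G: "D1 \<subseteq> Pow G" using insert(4) unfolding D1_def by auto
  have DU: "D = Da \<union> Db" unfolding Da_def Db_def by auto
  have "Da \<inter> Db = {}" unfolding Da_def Db_def by auto
  moreover have "finite Da" "finite Db" using finD unfolding Da_def Db_def by auto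
  ultimately have cD: "card D = card Da + card Db"
    by (subst DU) (rule card_Un_disjoint)
  have D0eq: "D0 = Da \<union> (\<lambda>d. d - {x}) ` Db"
  proof -
    have "(\<lambda>d. d - {x}) ` Da = (\<lambda>d. d) ` Da" by (rule image_cong) (auto simp: Da_def)
    then have "(\<lambda>d. d - {x}) ` Da = Da" by simp
    then show ?thesis unfolding D0_def by (subst DU) (simp add: image_Un)
  qed
  have injb: "inj_on (\<lambda>d. d - {x}) Db" unfolding Db_def inj_on_def by blast
  have cB: "card ((\<lambda>d. d - {x}) ` Db) = card Db" using card_image[OF injb] .
  have Int: "Da \<inter> (\<lambda>d. d - {x}) ` Db = D1"
  proof (intro equalityI subsetI)
    fix d assume "d \<in> Da \<inter> (\<lambda>d. d - {x}) ` Db"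
    then obtain e where "d \<in> D" "x \<notin> d" "e \<in> D" "x \<in> e" "d = e - {x}"
      unfolding Da_def Db_def by auto
    moreover then have "insert x d = e" by auto
    ultimately show "d \<in> D1" unfolding D1_def by auto
  next
    fix d assume "d \<in> D1"
    then have "d \<in> D" "x \<notin> d" "insert x d \<in> D" unfolding D1_def by auto
    moreover have "d = insert x d - {x}" using \<open>x \<notin> d\<close> by auto
    ultimately show "d \<in> Da \<inter> (\<lambda>d. d - {x}) ` Db" unfolding Da_def Db_def by blast
  qed
  have fDa: "finite Da" "finite ((\<lambda>d. d - {x}) ` Db)" using finD unfolding Da_def Db_def by auto
  have "card D0 + card D1 = card Da + card Db"
    using card_Un_Int[OF fDa] D0eq Int cB by simp
  then have cD': "card D = card D0 + card D1" using cD by simp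
  have IH0: "card D0 \<le> card (shattered_sets G D0)" using insert.IH[OF D0G] .
  have IH1: "card D1 \<le> card (shattered_sets G D1)" using insert.IH[OF D1G] .
  have s0: "shattered_sets G D0 \<subseteq> shattered_sets (insert x G) D"
  proof
    fix A assume "A \<in> shattered_sets G D0"
    then have A: "A \<subseteq> G" "shattered D0 A" unfolding shattered_sets_def by auto
    have "restr D0 A = restr D A" unfolding restr_def D0_def image_image
      using A(1) insert(2) by (intro image_cong) auto
    then show "A \<in> shattered_sets (insert x G) D" using A unfolding shattered_sets_def shattered_def by auto
  qed
  have s1: "insert x ` shattered_sets G D1 \<subseteq> shattered_sets (insert x G) D"
  proof
    fix B assume "B \<in> insert x ` shattered_sets G D1"
    then obtain A where B: "B = insert x A" and A: "A \<subseteq> G" "shattered D1 A"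
      unfolding shattered_sets_def by auto
    have "Pow (insert x A) \<subseteq> restr D (insert x A)"
    proof
      fix Z assume Z: "Z \<in> Pow (insert x A)"
      then have "Z - {x} \<in> Pow A" by auto
      then have "Z - {x} \<in> restr D1 A" using A unfolding shattered_def by simp
      then obtain d1 where d1: "d1 \<in> D1" "d1 \<inter> A = Z - {x}" unfolding restr_def by auto
      show "Z \<in> restr D (insert x A)"
      proof (cases "x \<in> Z")
        case True
        have "insert x d1 \<in> D" using d1 unfolding D1_def by auto
        moreover have "Z = insert x d1 \<inter> insert x A" using d1 True Z by auto
        ultimately show ?thesis unfolding restr_def by (rule rev_image_eqI)
      next
        case False
        have "d1 \<in> D" "x \<notin> d1" using d1 unfolding D1_def by auto
        moreover have "Z = d1 \<inter> insert x A" using d1 False Z \<open>x \<notin> d1\<close> by auto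
        ultimately show ?thesis unfolding restr_def by (meson rev_image_eqI)
      qed
    qed
    then show "B \<in> shattered_sets (insert x G) D" using A B unfolding shattered_sets_def shattered_iff by auto
  qed
  have disj: "shattered_sets G D0 \<inter> insert x ` shattered_sets G D1 = {}"
    using insert(2) unfolding shattered_sets_def by auto
  have inj1: "inj_on (insert x) (shattered_sets G D1)"
  proof (rule inj_onI)
    fix A B assume "A \<in> shattered_sets G D1" "B \<in> shattered_sets G D1" "insert x A = insert x B"
    moreover then have "x \<notin> A" "x \<notin> B" using insert(2) unfolding shattered_sets_def by auto
    ultimately show "A = B" by (metis Diff_insert_absorb)
  qed
  have "shattered_sets (insert x G) D \<subseteq> Pow (insert x G)" unfolding shattered_sets_def by auto
  then have finS: "finite (shattered_sets (insert x G) D)"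
    using \<open>finite (Pow (insert x G))\<close> by (rule finite_subset)
  have "card D \<le> card (shattered_sets G D0) + card (insert x ` shattered_sets G D1)"
    using cD' IH0 IH1 card_image[OF inj1] by simp
  also have "\<dots> = card (shattered_sets G D0 \<union> insert x ` shattered_sets G D1)"
  proof -
    have "finite (shattered_sets G D0)" "finite (insert x ` shattered_sets G D1)"
      using finite_subset[OF s0 finS] finite_subset[OF s1 finS] by auto
    then show ?thesis using disj by (simp add: card_Un_disjoint)
  qed
  also have "\<dots> \<le> card (shattered_sets (insert x G) D)"
    using s0 s1 finS by (intro card_mono) simp_all
  finally show ?case .
qed



lemma princ:
  assumes fin: "finite G" and DG: "D \<subseteq> Pow G" and rhoG: "\<And>d. d \<in> D \<Longrightarrow> \<rho> d \<subseteq> G"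
    and nc: "\<And>d d'. d \<in> D \<Longrightarrow> d' \<in> D \<Longrightarrow> d \<noteq> d' \<Longrightarrow>
               d \<inter> (\<rho> d \<union> \<rho> d') \<noteq> d' \<inter> (\<rho> d \<union> \<rho> d')"
    and surj: "\<And>A d. A \<subseteq> G \<Longrightarrow> d \<in> D \<Longrightarrow> \<exists>e\<in>D. \<rho> e \<subseteq> A \<and> e \<inter> A = d \<inter> A"
  shows "is_rep_map G D \<rho>"
proof -
  define R where "R A = {d \<in> D. \<rho> d \<subseteq> A}" for A
  define SS where "SS A = {A'. A' \<subseteq> A \<and> shattered D A'}" for A
  have finD: "finite D" using finite_subset[OF DG] fin by simp
  have key: "A \<subseteq> G \<longrightarrow> inj_on \<rho> (R A) \<and> \<rho> ` R A = SS A" if "finite A" for A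
    using that
  proof (induction A rule: finite_psubset_induct)
    case (psubset A)
    show ?case
    proof
      assume AG: "A \<subseteq> G"
      define Rm where "Rm = {d \<in> D. \<rho> d \<subset> A}"
      define SSm where "SSm = {A'. A' \<subset> A \<and> shattered D A'}"
      have IH: "inj_on \<rho> (R B) \<and> \<rho> ` R B = SS B" if "B \<subset> A" for B
      proof -
        have "B \<subseteq> G" using that AG by auto
        then show ?thesis using psubset.IH[OF that] by blast
      qed
      have injm: "inj_on \<rho> Rm"
      proof (rule inj_onI)
        fix d d' assume d: "d \<in> Rm" "d' \<in> Rm" "\<rho> d = \<rho> d'"
        then have "\<rho> d \<subset> A" unfolding Rm_def by auto
        then have "inj_on \<rho> (R (\<rho> d))" using IH by blast
        moreover have "d \<in> R (\<rho> d)" "d' \<in> R (\<rho> d)" using d unfolding R_def Rm_def by auto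
        ultimately show "d = d'" using d(3) by (simp add: inj_on_def)
      qed
      have imm: "\<rho> ` Rm = SSm"
      proof (intro equalityI subsetI)
        fix B assume "B \<in> \<rho> ` Rm"
        then obtain d where d: "d \<in> Rm" "B = \<rho> d" by auto
        then have BA: "B \<subset> A" unfolding Rm_def by auto
        have "d \<in> R B" using d unfolding R_def Rm_def by auto
        then have "B \<in> SS B" using IH[OF BA] d(2) by blast
        then show "B \<in> SSm" using BA unfolding SS_def SSm_def by auto
      next
        fix B assume "B \<in> SSm"
        then have BA: "B \<subset> A" and "B \<in> SS B" unfolding SSm_def SS_def by auto
        then have "B \<in> \<rho> ` R B" using IH[OF BA] by blast
        then obtain d where "d \<in> R B" "B = \<rho> d" by auto
        then have "d \<in> Rm" using BA unfolding R_def Rm_def by auto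
        then show "B \<in> \<rho> ` Rm" using \<open>B = \<rho> d\<close> by blast
      qed
      have finR: "finite (R A)" using finD unfolding R_def by auto
      have RmR: "Rm \<subseteq> R A" unfolding Rm_def R_def by auto
      have bij: "bij_betw (\<lambda>d. d \<inter> A) (R A) (restr D A)"
        unfolding bij_betw_def
      proof
        show "inj_on (\<lambda>d. d \<inter> A) (R A)"
        proof (rule inj_onI)
          fix d d' assume d: "d \<in> R A" "d' \<in> R A" "d \<inter> A = d' \<inter> A"
          show "d = d'"
          proof (rule ccontr)
            assume "d \<noteq> d'"
            then have "d \<inter> (\<rho> d \<union> \<rho> d') \<noteq> d' \<inter> (\<rho> d \<union> \<rho> d')" using nc d unfolding R_def by auto
            moreover have "\<rho> d \<union> \<rho> d' \<subseteq> A" using d unfolding R_def by auto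
            then have "d \<inter> (\<rho> d \<union> \<rho> d') = (d \<inter> A) \<inter> (\<rho> d \<union> \<rho> d')"
              "d' \<inter> (\<rho> d \<union> \<rho> d') = (d' \<inter> A) \<inter> (\<rho> d \<union> \<rho> d')" by auto
            ultimately show False using d(3) by simp
          qed
        qed
      next
        show "(\<lambda>d. d \<inter> A) ` R A = restr D A"
        proof (intro equalityI subsetI)
          fix s assume "s \<in> (\<lambda>d. d \<inter> A) ` R A"
          then obtain d where "d \<in> R A" "s = d \<inter> A" by blast
          then have "d \<in> D" unfolding R_def by simp
          then show "s \<in> restr D A" unfolding restr_def using \<open>s = d \<inter> A\<close> by (rule rev_image_eqI)
        next
          fix s assume "s \<in> restr D A"
          then obtain d where d: "d \<in> D" "s = d \<inter> A" unfolding restr_def by auto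
          then obtain e where "e \<in> D" "\<rho> e \<subseteq> A" "e \<inter> A = d \<inter> A" using surj[OF AG] by blast
          then have "e \<in> R A" unfolding R_def by auto
          moreover have "s = e \<inter> A" using d \<open>e \<inter> A = d \<inter> A\<close> by simp
          ultimately show "s \<in> (\<lambda>d. d \<inter> A) ` R A" by (rule rev_image_eqI)
        qed
      qed
      then have cR: "card (R A) = card (restr D A)" by (rule bij_betw_same_card)
      have "shattered_sets A (restr D A) = SS A"
        unfolding shattered_sets_def SS_def using shattered_restr by blast
      then have cle: "card (R A) \<le> card (SS A)"
        using pajor[OF psubset.hyps restr_sub_Pow[of D A]] cR by simp
      have finSS: "finite (SS A)" using psubset.hyps unfolding SS_def by auto
      show "inj_on \<rho> (R A) \<and> \<rho> ` R A = SS A"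
      proof (cases "shattered D A")
        case False
        then have "SS A = SSm" unfolding SS_def SSm_def by auto
        then have "card (R A) \<le> card Rm" using cle card_image[OF injm] imm by simp
        then have "Rm = R A" using card_seteq[OF finR RmR] by simp
        then show ?thesis using injm imm \<open>SS A = SSm\<close> by simp
      next
        case True
        then have "restr D A = Pow A" unfolding shattered_def .
        then have c1: "card (R A) = card (Pow A)" using cR by simp
        have SSA: "SS A = Pow A" unfolding SS_def using shattered_mono[OF True] by auto
        have "SSm = Pow A - {A}" unfolding SSm_def using shattered_mono[OF True] by auto
        then have "card SSm = card (Pow A) - 1" using psubset.hyps by simp
        then have "card Rm = card (Pow A) - 1" using card_image[OF injm] imm by simp
        moreover have "card (Pow A) > 0" using psubset.hyps by (simp add: card_Pow)
        ultimately have "card (R A - Rm) = 1"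
          using card_Diff_subset[OF finite_subset[OF RmR finR] RmR] c1 by simp
        then obtain d0 where d0: "R A - Rm = {d0}" by (rule card_1_singletonE)
        then have RA: "R A = insert d0 Rm" using RmR by blast
        have "d0 \<in> R A" "d0 \<notin> Rm" using d0 by auto
        then have rd0: "\<rho> d0 = A" unfolding R_def Rm_def by auto
        have "A \<notin> SSm" unfolding SSm_def by auto
        then have "\<rho> d0 \<notin> \<rho> ` Rm" using imm rd0 by simp
        then have "inj_on \<rho> (R A)" using RA injm by auto
        moreover have "\<rho> ` R A = SS A" using RA imm rd0 SSA \<open>SSm = Pow A - {A}\<close> by auto
        ultimately show ?thesis by simp
      qed
    qed
  qed
  have "R G = D" using rhoG unfolding R_def by auto
  moreover have "SS G = shattered_sets G D" unfolding SS_def shattered_sets_def by auto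
  ultimately have "bij_betw \<rho> D (shattered_sets G D)"
    using key[OF fin] unfolding bij_betw_def by auto
  then show ?thesis unfolding is_rep_map_def using nc by blast
qed



lemma rep_surj:
  assumes fin: "finite X" and CX: "C \<subseteq> Pow X" and rep: "is_rep_map X C r"
    and AX: "A \<subseteq> X" and c: "c \<in> C"
  shows "\<exists>e\<in>C. r e \<subseteq> A \<and> e \<inter> A = c \<inter> A"
proof -
  have bij: "bij_betw r C (shattered_sets X C)" and
    nc: "\<And>d d'. d \<in> C \<Longrightarrow> d' \<in> C \<Longrightarrow> d \<noteq> d' \<Longrightarrow> d \<inter> (r d \<union> r d') \<noteq> d' \<inter> (r d \<union> r d')"
    using rep unfolding is_rep_map_def by auto
  define R where "R = {e \<in> C. r e \<subseteq> A}"
  have finC: "finite C" using finite_subset[OF CX] fin by simp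
  have finR: "finite R" using finC unfolding R_def by simp
  have injR: "inj_on (\<lambda>d. d \<inter> A) R"
  proof (rule inj_onI)
    fix d d' assume d: "d \<in> R" "d' \<in> R" "d \<inter> A = d' \<inter> A"
    show "d = d'"
    proof (rule ccontr)
      assume "d \<noteq> d'"
      then have "d \<inter> (r d \<union> r d') \<noteq> d' \<inter> (r d \<union> r d')" using nc d unfolding R_def by auto
      moreover have "r d \<union> r d' \<subseteq> A" using d unfolding R_def by auto
      then have "d \<inter> (r d \<union> r d') = (d \<inter> A) \<inter> (r d \<union> r d')"
        "d' \<inter> (r d \<union> r d') = (d' \<inter> A) \<inter> (r d \<union> r d')" by auto
      ultimately show False using d(3) by simp
    qed
  qed
  have "r ` R = {S \<in> shattered_sets X C. S \<subseteq> A}"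
  proof (intro equalityI subsetI)
    fix S assume "S \<in> r ` R"
    then obtain e where "e \<in> R" "S = r e" by blast
    then show "S \<in> {S \<in> shattered_sets X C. S \<subseteq> A}"
      using bij unfolding R_def bij_betw_def by auto
  next
    fix S assume S: "S \<in> {S \<in> shattered_sets X C. S \<subseteq> A}"
    then have "S \<in> r ` C" using bij unfolding bij_betw_def by simp
    then obtain e where "e \<in> C" "S = r e" by blast
    then have "e \<in> R" using S unfolding R_def by simp
    then show "S \<in> r ` R" using \<open>S = r e\<close> by blast
  qed
  also have "\<dots> = shattered_sets A (restr C A)"
    unfolding shattered_sets_def using AX shattered_restr by blast
  finally have rR: "r ` R = shattered_sets A (restr C A)" .
  have "inj_on r R" using bij unfolding bij_betw_def R_def by (auto intro: inj_on_subset)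
  then have "card R = card (shattered_sets A (restr C A))" using rR card_image by fastforce
  moreover have "finite A" using fin AX finite_subset by blast
  ultimately have cle: "card (restr C A) \<le> card R" using pajor restr_sub_Pow by metis
  have sub: "(\<lambda>d. d \<inter> A) ` R \<subseteq> restr C A" unfolding R_def restr_def by auto
  have finr: "finite (restr C A)" unfolding restr_def using finC by simp
  have "(\<lambda>d. d \<inter> A) ` R = restr C A"
    using card_seteq[OF finr sub] cle card_image[OF injR] by simp
  moreover have "c \<inter> A \<in> restr C A" unfolding restr_def using c by simp
  ultimately obtain e where "e \<in> R" "c \<inter> A = e \<inter> A" by (metis imageE)
  then show ?thesis unfolding R_def by auto
qed



lemma part1:
  assumes fin: "finite X" and CX: "C \<subseteq> Pow X" and rep: "is_rep_map X C r"
    and SX: "S \<subseteq> X" and TS: "T \<subseteq> X - S"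
  shows "is_rep_map X (C \<inter> cube T S) (\<lambda>c. r c \<inter> S)"
proof (rule princ[OF fin])
  have TS0: "T \<inter> S = {}" using TS by auto
  have nc: "\<And>d d'. d \<in> C \<Longrightarrow> d' \<in> C \<Longrightarrow> d \<noteq> d' \<Longrightarrow> d \<inter> (r d \<union> r d') \<noteq> d' \<inter> (r d \<union> r d')"
    and rX: "\<And>d. d \<in> C \<Longrightarrow> r d \<subseteq> X"
    using rep unfolding is_rep_map_def bij_betw_def shattered_sets_def by auto
  show "C \<inter> cube T S \<subseteq> Pow X" using CX by auto
  show "\<And>d. d \<in> C \<inter> cube T S \<Longrightarrow> r d \<inter> S \<subseteq> X" using rX by auto
  show "d \<inter> (r d \<inter> S \<union> r d' \<inter> S) \<noteq> d' \<inter> (r d \<inter> S \<union> r d' \<inter> S)"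
    if d: "d \<in> C \<inter> cube T S" "d' \<in> C \<inter> cube T S" "d \<noteq> d'" for d d'
  proof
    assume eq: "d \<inter> (r d \<inter> S \<union> r d' \<inter> S) = d' \<inter> (r d \<inter> S \<union> r d' \<inter> S)"
    have "d - S = T" "d' - S = T" using d cube_iff[OF TS0] by auto
    then have "d \<inter> (r d \<union> r d') = (d \<inter> (r d \<inter> S \<union> r d' \<inter> S)) \<union> (T \<inter> (r d \<union> r d'))"
      "d' \<inter> (r d \<union> r d') = (d' \<inter> (r d \<inter> S \<union> r d' \<inter> S)) \<union> (T \<inter> (r d \<union> r d'))" by auto
    then have "d \<inter> (r d \<union> r d') = d' \<inter> (r d \<union> r d')" using eq by simp
    then show False using nc d by auto
  qed
  show "\<exists>e\<in>C \<inter> cube T S. r e \<inter> S \<subseteq> A \<and> e \<inter> A = d \<inter> A"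
    if A: "A \<subseteq> X" and d: "d \<in> C \<inter> cube T S" for A d
  proof -
    define Z where "Z = (X - S) \<union> (A \<inter> S)"
    have ZX: "Z \<subseteq> X" unfolding Z_def using A by auto
    obtain e where e: "e \<in> C" "r e \<subseteq> Z" "e \<inter> Z = d \<inter> Z"
      using rep_surj[OF fin CX rep ZX, of d] d by blast
    have dT: "d - S = T" using d cube_iff[OF TS0] by auto
    have "e \<subseteq> X" "d \<subseteq> X" using e(1) d CX by auto
    then have "e - S = e \<inter> (X - S)" "d - S = d \<inter> (X - S)" by auto
    moreover have "e \<inter> (X - S) = d \<inter> (X - S)" using e(3) unfolding Z_def by blast
    ultimately have "e - S = T" using dT by simp
    then have "e \<in> C \<inter> cube T S" using e(1) cube_iff[OF TS0] by auto
    moreover have "r e \<inter> S \<subseteq> A" using e(2) unfolding Z_def by auto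
    moreover have "A \<subseteq> Z" using A unfolding Z_def by auto
    then have "e \<inter> A = d \<inter> A" using e(3) by blast
    ultimately show ?thesis by blast
  qed
qed

lemma cube_lemma:
  assumes fin: "finite X" and CX: "C \<subseteq> Pow X" and rep: "is_rep_map X C r" and f: "f \<in> C"
  shows "cube (f - r f) (r f) \<subseteq> C"
proof -
  have rX: "r f \<subseteq> X" using rep f unfolding is_rep_map_def bij_betw_def shattered_sets_def by auto
  have fX: "f \<subseteq> X" using f CX by auto
  have T: "f - r f \<subseteq> X - r f" using fX by auto
  have T0: "(f - r f) \<inter> r f = {}" by auto
  have rep1: "is_rep_map X (C \<inter> cube (f - r f) (r f)) (\<lambda>c. r c \<inter> r f)"
    by (rule part1[OF fin CX rep rX T])
  have fB: "f \<in> C \<inter> cube (f - r f) (r f)" using f cube_iff[OF T0] by auto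
  have "r f \<inter> r f \<in> shattered_sets X (C \<inter> cube (f - r f) (r f))"
    using rep1 fB unfolding is_rep_map_def bij_betw_def by blast
  then have sh: "restr (C \<inter> cube (f - r f) (r f)) (r f) = Pow (r f)"
    unfolding shattered_sets_def shattered_def by simp
  show ?thesis
  proof
    fix b assume b: "b \<in> cube (f - r f) (r f)"
    then have "b \<inter> r f \<in> Pow (r f)" by auto
    then have "b \<inter> r f \<in> restr (C \<inter> cube (f - r f) (r f)) (r f)" using sh by simp
    then obtain b' where b': "b' \<in> C" "b' \<in> cube (f - r f) (r f)" "b \<inter> r f = b' \<inter> r f"
      unfolding restr_def by auto
    have "b - r f = f - r f" "b' - r f = f - r f" using b b'(2) cube_iff[OF T0] by auto
    then have "b = b'" using b'(3) by blast
    then show "b \<in> C" using b' by simp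
  qed
qed



lemma part3:
  assumes fin: "finite X" and CX: "C \<subseteq> Pow X" and rep: "is_rep_map X C r" and YX: "Y \<subseteq> X"
  shows "is_rep_map (X - Y) (restr C (X - Y)) (\<lambda>c. r (THE d. d \<in> C \<inter> cube c Y \<and> r d \<inter> Y = {}))"
proof -
  have nc: "\<And>d d'. d \<in> C \<Longrightarrow> d' \<in> C \<Longrightarrow> d \<noteq> d' \<Longrightarrow> d \<inter> (r d \<union> r d') \<noteq> d' \<inter> (r d \<union> r d')"
    and rX: "\<And>d. d \<in> C \<Longrightarrow> r d \<subseteq> X"
    using rep unfolding is_rep_map_def bij_betw_def shattered_sets_def by auto
  define P where "P c f \<longleftrightarrow> f \<in> C \<and> f \<inter> (X - Y) = c \<and> r f \<subseteq> X - Y" for c f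
  define dd where "dd c = (THE d. d \<in> C \<inter> cube c Y \<and> r d \<inter> Y = {})" for c
  have charP: "(f \<in> C \<inter> cube c Y \<and> r f \<inter> Y = {}) \<longleftrightarrow> P c f" if c: "c \<subseteq> X - Y" for c f
  proof -
    have c0: "c \<inter> Y = {}" using c by auto
    show ?thesis
    proof
      assume H: "f \<in> C \<inter> cube c Y \<and> r f \<inter> Y = {}"
      then have "f \<subseteq> X" "r f \<subseteq> X" "f - Y = c" using CX rX cube_iff[OF c0] by auto
      then show "P c f" using H unfolding P_def by auto
    next
      assume H: "P c f"
      then have "f \<subseteq> X" "r f \<subseteq> X" using CX rX unfolding P_def by auto
      then have "f - Y = c" using H unfolding P_def by auto
      then show "f \<in> C \<inter> cube c Y \<and> r f \<inter> Y = {}" using H cube_iff[OF c0] unfolding P_def by auto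
    qed
  qed
  have uniq: "f = f'" if "P c f" "P c f'" for c f f'
  proof (rule ccontr)
    assume "f \<noteq> f'"
    then have "f \<inter> (r f \<union> r f') \<noteq> f' \<inter> (r f \<union> r f')" using nc that unfolding P_def by auto
    moreover have "r f \<union> r f' \<subseteq> X - Y" using that unfolding P_def by auto
    then have "f \<inter> (r f \<union> r f') = (f \<inter> (X - Y)) \<inter> (r f \<union> r f')"
      "f' \<inter> (r f \<union> r f') = (f' \<inter> (X - Y)) \<inter> (r f \<union> r f')" by auto
    ultimately show False using that unfolding P_def by simp
  qed
  have ex: "\<exists>f. P c f" if c: "c \<in> restr C (X - Y)" for c
  proof -
    obtain c0 where c0: "c0 \<in> C" "c = c0 \<inter> (X - Y)" using c unfolding restr_def by auto
    obtain e where "e \<in> C" "r e \<subseteq> X - Y" "e \<inter> (X - Y) = c0 \<inter> (X - Y)"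
      using rep_surj[OF fin CX rep _ c0(1), of "X - Y"] by blast
    then have "P c e" using c0 unfolding P_def by simp
    then show ?thesis by blast
  qed
  have ddP: "P c (dd c)" if c: "c \<in> restr C (X - Y)" for c
  proof -
    have cs: "c \<subseteq> X - Y" using c restr_sub_Pow by blast
    obtain f where f: "P c f" using ex[OF c] by blast
    have "dd c = f" unfolding dd_def
    proof (rule the_equality)
      show "f \<in> C \<inter> cube c Y \<and> r f \<inter> Y = {}" using charP[OF cs] f by simp
      show "d = f" if "d \<in> C \<inter> cube c Y \<and> r d \<inter> Y = {}" for d
        using uniq[OF _ f] charP[OF cs] that by blast
    qed
    then show ?thesis using f by simp
  qed
  have ddU: "dd c = f" if c: "c \<in> restr C (X - Y)" and f: "P c f" for c f
    using uniq[OF ddP[OF c] f] .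
  show ?thesis
    unfolding dd_def[symmetric]
  proof (rule princ)
    show "finite (X - Y)" using fin by simp
    show "restr C (X - Y) \<subseteq> Pow (X - Y)" by (rule restr_sub_Pow)
    show "r (dd d) \<subseteq> X - Y" if "d \<in> restr C (X - Y)" for d
      using ddP[OF that] unfolding P_def by simp
    show "d \<inter> (r (dd d) \<union> r (dd d')) \<noteq> d' \<inter> (r (dd d) \<union> r (dd d'))"
      if d: "d \<in> restr C (X - Y)" "d' \<in> restr C (X - Y)" "d \<noteq> d'" for d d'
    proof -
      have P1: "P d (dd d)" and P2: "P d' (dd d')" using ddP[OF d(1)] ddP[OF d(2)] by auto
      then have "dd d \<noteq> dd d'" using d(3) unfolding P_def by metis
      moreover have "dd d \<in> C" "dd d' \<in> C" using P1 P2 unfolding P_def by auto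
      ultimately have "dd d \<inter> (r (dd d) \<union> r (dd d')) \<noteq> dd d' \<inter> (r (dd d) \<union> r (dd d'))"
        using nc by blast
      moreover have "r (dd d) \<union> r (dd d') \<subseteq> X - Y" using P1 P2 unfolding P_def by auto
      then have "dd d \<inter> (r (dd d) \<union> r (dd d')) = d \<inter> (r (dd d) \<union> r (dd d'))"
        "dd d' \<inter> (r (dd d) \<union> r (dd d')) = d' \<inter> (r (dd d) \<union> r (dd d'))"
        using P1 P2 unfolding P_def by auto
      ultimately show ?thesis by simp
    qed
    show "\<exists>e\<in>restr C (X - Y). r (dd e) \<subseteq> A \<and> e \<inter> A = d \<inter> A"
      if A: "A \<subseteq> X - Y" and d: "d \<in> restr C (X - Y)" for A d
    proof -
      have P1: "P d (dd d)" using ddP d by auto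
      have AX: "A \<subseteq> X" using A by auto
      obtain f where f: "f \<in> C" "r f \<subseteq> A" "f \<inter> A = dd d \<inter> A"
        using rep_surj[OF fin CX rep AX, of "dd d"] P1 unfolding P_def by blast
      define e where "e = f \<inter> (X - Y)"
      have eR: "e \<in> restr C (X - Y)" unfolding e_def restr_def using f(1) by simp
      have "P e f" unfolding P_def e_def using f A by auto
      then have "dd e = f" using ddU[OF eR] by simp
      moreover have "e \<inter> A = d \<inter> A"
      proof -
        have "e \<inter> A = f \<inter> A" unfolding e_def using A by auto
        also have "\<dots> = dd d \<inter> A" by (rule f(3))
        also have "\<dots> = (dd d \<inter> (X - Y)) \<inter> A" using A by auto
        also have "\<dots> = d \<inter> A" using P1 unfolding P_def by simp
        finally show ?thesis .
      qed
      ultimately show ?thesis using eR f(2) by auto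
    qed
  qed
qed



lemma part2:
  assumes fin: "finite X" and CX: "C \<subseteq> Pow X" and rep: "is_rep_map X C r" and YX: "Y \<subseteq> X"
  shows "is_rep_map (X - Y) (reduction X C Y) (\<lambda>c. r (THE d. d \<in> cube c Y \<and> r d \<inter> Y = Y) - Y)"
proof -
  have rX: "\<And>d. d \<in> C \<Longrightarrow> r d \<subseteq> X"
    using rep unfolding is_rep_map_def bij_betw_def shattered_sets_def by auto
  define dd where "dd c = (THE d. d \<in> cube c Y \<and> r d \<inter> Y = Y)" for c
  have redD: "c \<subseteq> X - Y" "cube c Y \<subseteq> C" if "c \<in> reduction X C Y" for c
    using that unfolding reduction_def by auto
  have cubeY: "d - Y = c" if "c \<in> reduction X C Y" "d \<in> cube c Y" for c d
  proof -
    have "c \<inter> Y = {}" using redD[OF that(1)] by auto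
    then show ?thesis using cube_iff that(2) by blast
  qed
  have shY: "Y \<in> shattered_sets X E" if "c \<in> reduction X C Y" "cube c Y \<subseteq> E" for c E
  proof -
    have "Pow Y \<subseteq> restr E Y"
    proof
      fix Z assume Z: "Z \<in> Pow Y"
      have c0: "c \<inter> Y = {}" using redD[OF that(1)] by auto
      have "(c \<union> Z) - Y = c" using Z c0 by auto
      then have "c \<union> Z \<in> cube c Y" using cube_iff[OF c0] by blast
      then have "c \<union> Z \<in> E" using that(2) by blast
      moreover have "Z = (c \<union> Z) \<inter> Y" using Z c0 by auto
      ultimately show "Z \<in> restr E Y" unfolding restr_def by (rule rev_image_eqI)
    qed
    then show ?thesis unfolding shattered_sets_def shattered_iff using YX by simp
  qed
  have exu: "\<exists>!d. d \<in> cube c Y \<and> r d \<inter> Y = Y" if c: "c \<in> reduction X C Y" for c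
  proof -
    have rep1: "is_rep_map X (C \<inter> cube c Y) (\<lambda>d. r d \<inter> Y)"
      by (rule part1[OF fin CX rep YX redD(1)[OF c]])
    have CC: "C \<inter> cube c Y = cube c Y" using redD(2)[OF c] by auto
    have bij: "bij_betw (\<lambda>d. r d \<inter> Y) (cube c Y) (shattered_sets X (cube c Y))"
      using rep1 CC unfolding is_rep_map_def by simp
    have "Y \<in> shattered_sets X (cube c Y)" using shY[OF c] by simp
    then have "Y \<in> (\<lambda>d. r d \<inter> Y) ` cube c Y" using bij unfolding bij_betw_def by simp
    then obtain d where d: "d \<in> cube c Y" "r d \<inter> Y = Y" by auto
    show ?thesis
    proof (rule ex1I[of _ d])
      show "d \<in> cube c Y \<and> r d \<inter> Y = Y" using d by simp
      show "d' = d" if "d' \<in> cube c Y \<and> r d' \<inter> Y = Y" for d'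
        using bij that d unfolding bij_betw_def inj_on_def by metis
    qed
  qed
  have ddP: "dd c \<in> cube c Y \<and> r (dd c) \<inter> Y = Y" if c: "c \<in> reduction X C Y" for c
    unfolding dd_def using theI'[OF exu[OF c]] .
  have ddU: "dd c = f" if c: "c \<in> reduction X C Y" and "f \<in> cube c Y" "r f \<inter> Y = Y" for c f
    unfolding dd_def using the1_equality[OF exu[OF c]] that(2,3) by blast
  have ddC: "dd c \<in> C" "dd c - Y = c" "Y \<subseteq> r (dd c)" "r (dd c) \<subseteq> X" "dd c \<subseteq> X"
    if c: "c \<in> reduction X C Y" for c
  proof -
    show "dd c \<in> C" using ddP[OF c] redD(2)[OF c] by blast
    then show "r (dd c) \<subseteq> X" "dd c \<subseteq> X" using rX CX by auto
    show "dd c - Y = c" using cubeY[OF c] ddP[OF c] by blast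
    show "Y \<subseteq> r (dd c)" using ddP[OF c] by blast
  qed
  show ?thesis
    unfolding dd_def[symmetric]
  proof (rule princ)
    show "finite (X - Y)" using fin by simp
    show "reduction X C Y \<subseteq> Pow (X - Y)" unfolding reduction_def by auto
    show "r (dd d) - Y \<subseteq> X - Y" if "d \<in> reduction X C Y" for d
      using ddC(4)[OF that] by auto
    show "c \<inter> (r (dd c) - Y \<union> (r (dd c') - Y)) \<noteq> c' \<inter> (r (dd c) - Y \<union> (r (dd c') - Y))"
      if c: "c \<in> reduction X C Y" "c' \<in> reduction X C Y" "c \<noteq> c'" for c c'
    proof
      define W where "W = r (dd c) - Y \<union> (r (dd c') - Y)"
      assume eq: "c \<inter> W = c' \<inter> W"
      have WX: "W \<subseteq> X" "W \<inter> Y = {}" using ddC(4)[OF c(1)] ddC(4)[OF c(2)] unfolding W_def by auto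
      have T: "c \<inter> W \<subseteq> X - (X - W)" using WX by auto
      have T0: "(c \<inter> W) \<inter> (X - W) = {}" by auto
      have rep1: "is_rep_map X (C \<inter> cube (c \<inter> W) (X - W)) (\<lambda>d. r d \<inter> (X - W))"
        by (rule part1[OF fin CX rep _ T]) auto
      have m1: "dd c \<in> C \<inter> cube (c \<inter> W) (X - W)"
      proof -
        have "dd c - (X - W) = dd c \<inter> W" using ddC(5)[OF c(1)] by auto
        also have "\<dots> = (dd c - Y) \<inter> W" using WX by auto
        also have "\<dots> = c \<inter> W" using ddC(2)[OF c(1)] by simp
        finally show ?thesis using cube_iff[OF T0] ddC(1)[OF c(1)] by blast
      qed
      have m2: "dd c' \<in> C \<inter> cube (c \<inter> W) (X - W)"
      proof -
        have "dd c' - (X - W) = dd c' \<inter> W" using ddC(5)[OF c(2)] by auto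
        also have "\<dots> = (dd c' - Y) \<inter> W" using WX by auto
        also have "\<dots> = c \<inter> W" using ddC(2)[OF c(2)] eq by simp
        finally show ?thesis using cube_iff[OF T0] ddC(1)[OF c(2)] by blast
      qed
      have "r (dd c) \<inter> (X - W) = Y"
        using ddC(3,4)[OF c(1)] WX YX unfolding W_def by blast
      moreover have "r (dd c') \<inter> (X - W) = Y"
        using ddC(3,4)[OF c(2)] WX YX unfolding W_def by blast
      ultimately have "dd c = dd c'" using rep1 m1 m2 unfolding is_rep_map_def bij_betw_def inj_on_def
        by metis
      then show False using ddC(2)[OF c(1)] ddC(2)[OF c(2)] c(3) by simp
    qed
    show "\<exists>e\<in>reduction X C Y. r (dd e) - Y \<subseteq> A \<and> e \<inter> A = c \<inter> A"
      if A: "A \<subseteq> X - Y" and c: "c \<in> reduction X C Y" for A c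
    proof -
      have T: "c \<inter> A \<subseteq> X - (X - A)" using A by auto
      have T0: "(c \<inter> A) \<inter> (X - A) = {}" by auto
      have rep1: "is_rep_map X (C \<inter> cube (c \<inter> A) (X - A)) (\<lambda>d. r d \<inter> (X - A))"
        by (rule part1[OF fin CX rep _ T]) auto
      have sub: "cube c Y \<subseteq> C \<inter> cube (c \<inter> A) (X - A)"
      proof
        fix x assume x: "x \<in> cube c Y"
        then have xC: "x \<in> C" using redD(2)[OF c] by blast
        then have "x \<subseteq> X" using CX by auto
        then have "x - (X - A) = x \<inter> A" by auto
        also have "\<dots> = (x - Y) \<inter> A" using A by auto
        also have "\<dots> = c \<inter> A" using cubeY[OF c x] by simp
        finally show "x \<in> C \<inter> cube (c \<inter> A) (X - A)" using cube_iff[OF T0] xC by blast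
      qed
      have "Y \<in> shattered_sets X (C \<inter> cube (c \<inter> A) (X - A))" by (rule shY[OF c sub])
      then have "Y \<in> (\<lambda>d. r d \<inter> (X - A)) ` (C \<inter> cube (c \<inter> A) (X - A))"
        using rep1 unfolding is_rep_map_def bij_betw_def by simp
      then obtain f where f: "f \<in> C" "f \<in> cube (c \<inter> A) (X - A)" "r f \<inter> (X - A) = Y" by auto
      have fX: "f \<subseteq> X" "r f \<subseteq> X" using f(1) CX rX by auto
      have "f - (X - A) = c \<inter> A" using f(2) cube_iff[OF T0] by blast
      then have fA: "f \<inter> A = c \<inter> A" using fX by auto
      have Yr: "Y \<subseteq> r f" using f(3) by auto
      have rA: "r f - Y \<subseteq> A" using f(3) fX by auto
      define e where "e = f - Y"
      have e0: "e \<inter> Y = {}" unfolding e_def by auto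
      have cl: "cube (f - r f) (r f) \<subseteq> C" by (rule cube_lemma[OF fin CX rep f(1)])
      have "cube e Y \<subseteq> C"
      proof
        fix x assume "x \<in> cube e Y"
        then have "x - Y = f - Y" using cube_iff[OF e0] unfolding e_def by blast
        then have "x - r f = f - r f" using Yr by blast
        then have "x \<in> cube (f - r f) (r f)" using cube_iff[of "f - r f" "r f" x] by auto
        then show "x \<in> C" using cl by blast
      qed
      moreover have "e \<subseteq> X - Y" unfolding e_def using fX by auto
      ultimately have eR: "e \<in> reduction X C Y" unfolding reduction_def by simp
      have "f \<in> cube e Y" using cube_iff[OF e0] unfolding e_def by blast
      then have "dd e = f" using ddU[OF eR] f(3) Yr by blast
      moreover have "e \<inter> A = c \<inter> A" using fA A unfolding e_def by auto
      ultimately show ?thesis using eR rA by auto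
    qed
  qed
qed


theorem proposition6p6:
  fixes X :: "'a set" and C :: "'a set set" and r :: "'a set \<Rightarrow> 'a set"
    and T S Y :: "'a set"
  assumes "finite X"
    and "ample X C"
    and "is_rep_map X C r"
    and "S \<subseteq> X" and "T \<subseteq> X - S"
    and "Y \<subseteq> X"
  shows "is_rep_map X (C \<inter> cube T S) (\<lambda>c. r c \<inter> S)
    \<and> is_rep_map (X - Y) (reduction X C Y)
           (\<lambda>c. r (THE d. d \<in> cube c Y \<and> r d \<inter> Y = Y) - Y)
    \<and> is_rep_map (X - Y) (restr C (X - Y))
           (\<lambda>c. r (THE d. d \<in> C \<inter> cube c Y \<and> r d \<inter> Y = {}))"
proof -
  have CX: "C \<subseteq> Pow X" using assms(2) unfolding ample_def by simp
  show ?thesis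
    using part1[OF assms(1) CX assms(3) assms(4) assms(5)]
      part2[OF assms(1) CX assms(3) assms(6)]
      part3[OF assms(1) CX assms(3) assms(6)] by simp
qed

end
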